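(* Let $((\mathfrak g,E),(\mathfrak h,F);\rho,\mu)$ be a matched pair of ENL algebras. Then $(\mathfrak g_E,\mathfrak h_F;\rho_{(E,F)},\mu_{(E,F)})$ is a matched pair of Lie algebras, where $\rho_{(E,F)}(x)\xi=\rho(Ex)\xi$ and $\mu_{(E,F)}(\xi)x=\mu(F\xi)x$ for $x\in\mathfrak g,\xi\in\mathfrak h$. Moreover, there is a canonical Lie algebra isomorphism $\mathfrak g_E\bowtie\mathfrak h_F\cong(\mathfrak g\bowtie\mathfrak h)_{E\oplus F}$.
   Context: All vector spaces are finite-dimensional over an algebraically closed field of characteristic zero. An ENL algebra $(\mathfrak g,[\cdot,\cdot]_{\mathfrak g},E)$ is a Lie algebra with a linear map $E$ such that $E[x,y]_{\mathfrak g}=[x,Ey]_{\mathfrak g}$ for all $x,y$ (equivalently $E[x,y]_{\mathfrak g}=[Ex,y]_{\mathfrak g}$); its deformed Lie algebra $\mathfrak g_E$ is $\mathfrak g$ with bracket $[x,y]_E:=[Ex,y]_{\mathfrak g}$. A matched pair of Lie algebras $(\mathfrak g,\mathfrak h;\rho,\mu)$: Lie algebras $\mathfrak g,\mathfrak h$ with representations $\rho:\mathfrak g\to\mathfrak{gl}(\mathfrak h)$, $\mu:\mathfrak h\to\mathfrak{gl}(\mathfrak g)$ such that $\rho(x)[\xi,\eta]_{\mathfrak h}=[\rho(x)\xi,\eta]_{\mathfrak h}+[\xi,\rho(x)\eta]_{\mathfrak h}+\rho(\mu(\eta)x)\xi-\rho(\mu(\xi)x)\eta$ and $\mu(\xi)[x,y]_{\mathfrak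 g}=[\mu(\xi)x,y]_{\mathfrak g}+[x,\mu(\xi)y]_{\mathfrak g}+\mu(\rho(y)\xi)x-\mu(\rho(x)\xi)y$. Its bicrossed product $\mathfrak g\bowtie\mathfrak h$ is $\mathfrak g\oplus\mathfrak h$ with the Lie bracket $[x+\xi,y+\eta]_{\bowtie}=([x,y]_{\mathfrak g}+\mu(\xi)y-\mu(\eta)x)+([\xi,\eta]_{\mathfrak h}+\rho(x)\eta-\rho(y)\xi)$. For ENL algebras $(\mathfrak g,E),(\mathfrak h,F)$, a matched pair of ENL algebras $((\mathfrak g,E),(\mathfrak h,F);\rho,\mu)$ is a matched pair of Lie algebras with $F(\rho(x)\xi)=\rho(Ex)\xi=\rho(x)(F\xi)$ and $E(\mu(\xi)x)=\mu(F\xi)x=\mu(\xi)(Ex)$ for all $x,\xi$. In that case $E\oplus F:x+\xi\mapsto Ex+F\xi$ makes $\mathfrak g\bowtie\mathfrak h$ an ENL algebra, and $(\mathfrak g\bowtie\mathfrak h)_{E\oplus F}$ denotes $\mathfrak g\oplus\mathfrak h$ with bracket $[u,v]_{E\oplus F}=[(E\oplus F)u,v]_{\bowtie}$. *)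

theory Defs
  imports "HOL-Computational_Algebra.Polynomial" "HOL-Library.Product_Plus"
begin

text \<open>Standing assumptions: the ground field is algebraically closed of characteristic zero
(characteristic zero via the class field_char_0), all spaces are finite-dimensional.\<close>

definition alg_closed_field :: "'k::field itself \<Rightarrow> bool" where
  "alg_closed_field _ \<longleftrightarrow> (\<forall>p::'k poly. degree p > 0 \<longrightarrow> (\<exists>x. poly p x = 0))"

definition fin_dim_vs :: "('k::field \<Rightarrow> 'v::ab_group_add \<Rightarrow> 'v) \<Rightarrow> bool" where
  "fin_dim_vs sc \<longleftrightarrow> (\<exists>B. finite_dimensional_vector_space sc B)"

definition lie_algebra ::
  "('k::field \<Rightarrow> 'v::ab_group_add \<Rightarrow> 'v) \<Rightarrow> ('v \<Rightarrow> 'v \<Rightarrow> 'v) \<Rightarrow> bool" where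
  "lie_algebra sc br \<longleftrightarrow> vector_space sc
     \<and> (\<forall>x. Vector_Spaces.linear sc sc (br x))
     \<and> (\<forall>y. Vector_Spaces.linear sc sc (\<lambda>x. br x y))
     \<and> (\<forall>x. br x x = 0)
     \<and> (\<forall>x y z. br x (br y z) + br y (br z x) + br z (br x y) = 0)"

definition lie_rep ::
  "('k::field \<Rightarrow> 'g::ab_group_add \<Rightarrow> 'g) \<Rightarrow> ('g \<Rightarrow> 'g \<Rightarrow> 'g) \<Rightarrow>
   ('k \<Rightarrow> 'v::ab_group_add \<Rightarrow> 'v) \<Rightarrow> ('g \<Rightarrow> 'v \<Rightarrow> 'v) \<Rightarrow> bool" where
  "lie_rep scg brg scv r \<longleftrightarrow>
     (\<forall>x. Vector_Spaces.linear scv scv (r x))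
     \<and> (\<forall>v. Vector_Spaces.linear scg scv (\<lambda>x. r x v))
     \<and> (\<forall>x y v. r (brg x y) v = r x (r y v) - r y (r x v))"

definition ENL_algebra ::
  "('k::field \<Rightarrow> 'g::ab_group_add \<Rightarrow> 'g) \<Rightarrow> ('g \<Rightarrow> 'g \<Rightarrow> 'g) \<Rightarrow> ('g \<Rightarrow> 'g) \<Rightarrow> bool" where
  "ENL_algebra sc br E \<longleftrightarrow> lie_algebra sc br \<and> Vector_Spaces.linear sc sc E
     \<and> (\<forall>x y. E (br x y) = br x (E y))"

definition deformed :: "('g \<Rightarrow> 'g \<Rightarrow> 'g) \<Rightarrow> ('g \<Rightarrow> 'g) \<Rightarrow> 'g \<Rightarrow> 'g \<Rightarrow> 'g" where
  "deformed br E x y = br (E x) y"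

definition matched_pair ::
  "('k::field \<Rightarrow> 'g::ab_group_add \<Rightarrow> 'g) \<Rightarrow> ('g \<Rightarrow> 'g \<Rightarrow> 'g) \<Rightarrow>
   ('k \<Rightarrow> 'h::ab_group_add \<Rightarrow> 'h) \<Rightarrow> ('h \<Rightarrow> 'h \<Rightarrow> 'h) \<Rightarrow>
   ('g \<Rightarrow> 'h \<Rightarrow> 'h) \<Rightarrow> ('h \<Rightarrow> 'g \<Rightarrow> 'g) \<Rightarrow> bool" where
  "matched_pair scg brg sch brh \<rho> \<mu> \<longleftrightarrow>
     lie_algebra scg brg \<and> lie_algebra sch brh
     \<and> lie_rep scg brg sch \<rho> \<and> lie_rep sch brh scg \<mu>
     \<and> (\<forall>x \<xi> \<eta>. \<rho> x (brh \<xi> \<eta>) =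
          brh (\<rho> x \<xi>) \<eta> + brh \<xi> (\<rho> x \<eta>) + \<rho> (\<mu> \<eta> x) \<xi> - \<rho> (\<mu> \<xi> x) \<eta>)
     \<and> (\<forall>\<xi> x y. \<mu> \<xi> (brg x y) =
          brg (\<mu> \<xi> x) y + brg x (\<mu> \<xi> y) + \<mu> (\<rho> y \<xi>) x - \<mu> (\<rho> x \<xi>) y)"

definition matched_pair_ENL ::
  "('k::field \<Rightarrow> 'g::ab_group_add \<Rightarrow> 'g) \<Rightarrow> ('g \<Rightarrow> 'g \<Rightarrow> 'g) \<Rightarrow> ('g \<Rightarrow> 'g) \<Rightarrow>
   ('k \<Rightarrow> 'h::ab_group_add \<Rightarrow> 'h) \<Rightarrow> ('h \<Rightarrow> 'h \<Rightarrow> 'h) \<Rightarrow> ('h \<Rightarrow> 'h) \<Rightarrow>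
   ('g \<Rightarrow> 'h \<Rightarrow> 'h) \<Rightarrow> ('h \<Rightarrow> 'g \<Rightarrow> 'g) \<Rightarrow> bool" where
  "matched_pair_ENL scg brg E sch brh F \<rho> \<mu> \<longleftrightarrow>
     ENL_algebra scg brg E \<and> ENL_algebra sch brh F
     \<and> matched_pair scg brg sch brh \<rho> \<mu>
     \<and> (\<forall>x \<xi>. F (\<rho> x \<xi>) = \<rho> (E x) \<xi> \<and> \<rho> (E x) \<xi> = \<rho> x (F \<xi>))
     \<and> (\<forall>x \<xi>. E (\<mu> \<xi> x) = \<mu> (F \<xi>) x \<and> \<mu> (F \<xi>) x = \<mu> \<xi> (E x))"

definition sum_scale :: "('k \<Rightarrow> 'g \<Rightarrow> 'g) \<Rightarrow> ('k \<Rightarrow> 'h \<Rightarrow> 'h) \<Rightarrow> 'k \<Rightarrow> 'g \<times> 'h \<Rightarrow> 'g \<times> 'h" where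
  "sum_scale scg sch c u = (scg c (fst u), sch c (snd u))"

definition bicrossed ::
  "('g::ab_group_add \<Rightarrow> 'g \<Rightarrow> 'g) \<Rightarrow> ('h::ab_group_add \<Rightarrow> 'h \<Rightarrow> 'h) \<Rightarrow>
   ('g \<Rightarrow> 'h \<Rightarrow> 'h) \<Rightarrow> ('h \<Rightarrow> 'g \<Rightarrow> 'g) \<Rightarrow> 'g \<times> 'h \<Rightarrow> 'g \<times> 'h \<Rightarrow> 'g \<times> 'h" where
  "bicrossed brg brh \<rho> \<mu> u v =
     (let (x, \<xi>) = u; (y, \<eta>) = v in
      (brg x y + \<mu> \<xi> y - \<mu> \<eta> x, brh \<xi> \<eta> + \<rho> x \<eta> - \<rho> y \<xi>))"

definition sum_map :: "('g \<Rightarrow> 'g) \<Rightarrow> ('h \<Rightarrow> 'h) \<Rightarrow> 'g \<times> 'h \<Rightarrow> 'g \<times> 'h" where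
  "sum_map E F u = (E (fst u), F (snd u))"

definition lie_algebra_iso ::
  "('k::field \<Rightarrow> 'a::ab_group_add \<Rightarrow> 'a) \<Rightarrow> ('a \<Rightarrow> 'a \<Rightarrow> 'a) \<Rightarrow>
   ('k \<Rightarrow> 'b::ab_group_add \<Rightarrow> 'b) \<Rightarrow> ('b \<Rightarrow> 'b \<Rightarrow> 'b) \<Rightarrow> ('a \<Rightarrow> 'b) \<Rightarrow> bool" where
  "lie_algebra_iso sca bra scb brb f \<longleftrightarrow>
     lie_algebra sca bra \<and> lie_algebra scb brb \<and> Vector_Spaces.linear sca scb f \<and> bij f
     \<and> (\<forall>x y. f (bra x y) = brb (f x) (f y))"

end

theory Submission
  imports Defs
begin

lemma addhom:
  fixes f :: "'a::ab_group_add \<Rightarrow> 'b::ab_group_add"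
  assumes "\<And>x y. f (x + y) = f x + f y"
  shows "f 0 = 0" "f (- x) = - f x" "f (x - y) = f x - f y"
proof -
  show z: "f 0 = 0" using assms[of 0 0] by simp
  have n: "f (- a) = - f a" for a
  proof -
    have "f (- a) + f a = 0" using assms[of "-a" a] z by simp
    thus ?thesis by (simp add: eq_neg_iff_add_eq_0)
  qed
  show "f (- x) = - f x" by (rule n)
  show "f (x - y) = f x - f y" using assms[of x "-y"] n[of y] by simp
qed

lemma jac:
  fixes brg :: "'g::ab_group_add \<Rightarrow> 'g \<Rightarrow> 'g" and brh :: "'h::ab_group_add \<Rightarrow> 'h \<Rightarrow> 'h"
  assumes g1: "\<And>a b c. brg (a+b) c = brg a c + brg b c"
  and g2: "\<And>a b c. brg c (a+b) = brg c a + brg c b"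
  and h1: "\<And>a b c. brh (a+b) c = brh a c + brh b c"
  and h2: "\<And>a b c. brh c (a+b) = brh c a + brh c b"
  and r1: "\<And>a b c. \<rho> (a+b) c = \<rho> a c + \<rho> b c"
  and r2: "\<And>a b c. \<rho> c (a+b) = \<rho> c a + \<rho> c b"
  and m1: "\<And>a b c. \<mu> (a+b) c = \<mu> a c + \<mu> b c"
  and m2: "\<And>a b c. \<mu> c (a+b) = \<mu> c a + \<mu> c b"
  and ag: "\<And>a b. brg a b = - brg b a"
  and ah: "\<And>a b. brh a b = - brh b a"
  and jg: "\<And>x y z. brg x (brg y z) + brg y (brg z x) + brg z (brg x y) = 0"
  and jh: "\<And>x y z. brh x (brh y z) + brh y (brh z x) + brh z (brh x y) = 0"
  and rr: "\<And>x y v. \<rho> (brg x y) v = \<rho> x (\<rho> y v) - \<rho> y (\<rho> x v)"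
  and mr: "\<And>x y v. \<mu> (brh x y) v = \<mu> x (\<mu> y v) - \<mu> y (\<mu> x v)"
  and c1: "\<And>x \<xi> \<eta>. \<rho> x (brh \<xi> \<eta>) =
          brh (\<rho> x \<xi>) \<eta> + brh \<xi> (\<rho> x \<eta>) + \<rho> (\<mu> \<eta> x) \<xi> - \<rho> (\<mu> \<xi> x) \<eta>"
  and c2: "\<And>\<xi> x y. \<mu> \<xi> (brg x y) =
          brg (\<mu> \<xi> x) y + brg x (\<mu> \<xi> y) + \<mu> (\<rho> y \<xi>) x - \<mu> (\<rho> x \<xi>) y"
  shows "bicrossed brg brh \<rho> \<mu> u (bicrossed brg brh \<rho> \<mu> v w) + bicrossed brg brh \<rho> \<mu> v (bicrossed brg brh \<rho> \<mu> w u) + bicrossed brg brh \<rho> \<mu> w (bicrossed brg brh \<rho> \<mu> u v) = 0"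
proof -
  obtain x \<xi> where u: "u = (x, \<xi>)" by fastforce
  obtain y \<eta> where v: "v = (y, \<eta>)" by fastforce
  obtain z \<zeta> where w: "w = (z, \<zeta>)" by fastforce
  note d = addhom[of "brg a" for a, OF g2] addhom[of "\<lambda>b. brg b a" for a, OF g1]
     addhom[of "brh a" for a, OF h2] addhom[of "\<lambda>b. brh b a" for a, OF h1]
     addhom[of "\<rho> a" for a, OF r2] addhom[of "\<lambda>b. \<rho> b a" for a, OF r1]
     addhom[of "\<mu> a" for a, OF m2] addhom[of "\<lambda>b. \<mu> b a" for a, OF m1]
  show ?thesis
    unfolding u v w bicrossed_def
    apply (simp add: g1 g2 h1 h2 r1 r2 m1 m2 d rr mr c1 c2)
    apply (simp add: ag[of "\<mu> \<eta> z" x] ag[of "\<mu> \<xi> y" z] ag[of "\<mu> \<zeta> x" y]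
       ah[of "\<rho> x \<eta>" \<zeta>] ah[of "\<rho> y \<zeta>" \<xi>] ah[of "\<rho> z \<xi>" \<eta>])
    using jg[of x y z] jh[of \<xi> \<eta> \<zeta>]
    apply (simp add: algebra_simps zero_prod_def)
    done
qed

lemma lin_add: "Vector_Spaces.linear s1 s2 f \<Longrightarrow> f (x + y) = f x + f y"
  by (simp add: Vector_Spaces.linear_iff)
lemma lin_scale: "Vector_Spaces.linear s1 s2 f \<Longrightarrow> f (s1 c x) = s2 c (f x)"
  by (simp add: Vector_Spaces.linear_iff)

lemma vs_sum:
  assumes "vector_space scg" "vector_space sch"
  shows "vector_space (sum_scale scg sch)"
  using assms unfolding vector_space_def sum_scale_def
  by (simp add: add_Pair)

lemma anti:
  fixes br :: "'a::ab_group_add \<Rightarrow> 'a \<Rightarrow> 'a"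
  assumes "\<And>a b c. br (a+b) c = br a c + br b c"
  and "\<And>a b c. br c (a+b) = br c a + br c b"
  and "\<And>a. br a a = 0"
  shows "br a b = - br b a"
proof -
  have "br (a+b) (a+b) = 0" by (rule assms(3))
  hence "br a b + br b a = 0" using assms(3)[of a] assms(3)[of b] by (simp add: assms(1,2) add.commute)
  thus ?thesis by (simp add: eq_neg_iff_add_eq_0)
qed

lemma bicrossed_lie:
  assumes mp: "matched_pair scg brg sch brh \<rho> \<mu>"
  shows "lie_algebra (sum_scale scg sch) (bicrossed brg brh \<rho> \<mu>)"
proof -
  from mp have lg: "lie_algebra scg brg" and lh: "lie_algebra sch brh"
    and rg: "lie_rep scg brg sch \<rho>" and rh: "lie_rep sch brh scg \<mu>"
    and c1: "\<And>x \<xi> \<eta>. \<rho> x (brh \<xi> \<eta>) =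
          brh (\<rho> x \<xi>) \<eta> + brh \<xi> (\<rho> x \<eta>) + \<rho> (\<mu> \<eta> x) \<xi> - \<rho> (\<mu> \<xi> x) \<eta>"
    and c2: "\<And>\<xi> x y. \<mu> \<xi> (brg x y) =
          brg (\<mu> \<xi> x) y + brg x (\<mu> \<xi> y) + \<mu> (\<rho> y \<xi>) x - \<mu> (\<rho> x \<xi>) y"
    unfolding matched_pair_def by auto
  have vg: "vector_space scg" and vh: "vector_space sch" using lg lh unfolding lie_algebra_def by auto
  have vs: "vector_space (sum_scale scg sch)" by (rule vs_sum[OF vg vh])
  have g1: "\<And>a b c. brg (a+b) c = brg a c + brg b c"
   and g2: "\<And>a b c. brg c (a+b) = brg c a + brg c b"
   and gs1: "\<And>k a b. brg (scg k a) b = scg k (brg a b)"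
   and gs2: "\<And>k a b. brg b (scg k a) = scg k (brg b a)"
   and g0: "\<And>a. brg a a = 0"
   and jg: "\<And>x y z. brg x (brg y z) + brg y (brg z x) + brg z (brg x y) = 0"
    using lg unfolding lie_algebra_def Vector_Spaces.linear_iff by auto
  have h1: "\<And>a b c. brh (a+b) c = brh a c + brh b c"
   and h2: "\<And>a b c. brh c (a+b) = brh c a + brh c b"
   and hs1: "\<And>k a b. brh (sch k a) b = sch k (brh a b)"
   and hs2: "\<And>k a b. brh b (sch k a) = sch k (brh b a)"
   and h0: "\<And>a. brh a a = 0"
   and jh: "\<And>x y z. brh x (brh y z) + brh y (brh z x) + brh z (brh x y) = 0"
    using lh unfolding lie_algebra_def Vector_Spaces.linear_iff by auto
  have r1: "\<And>a b c. \<rho> (a+b) c = \<rho> a c + \<rho> b c"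
   and r2: "\<And>a b c. \<rho> c (a+b) = \<rho> c a + \<rho> c b"
   and rs1: "\<And>k a b. \<rho> (scg k a) b = sch k (\<rho> a b)"
   and rs2: "\<And>k a b. \<rho> b (sch k a) = sch k (\<rho> b a)"
   and rr: "\<And>x y v. \<rho> (brg x y) v = \<rho> x (\<rho> y v) - \<rho> y (\<rho> x v)"
    using rg unfolding lie_rep_def Vector_Spaces.linear_iff by auto
  have m1: "\<And>a b c. \<mu> (a+b) c = \<mu> a c + \<mu> b c"
   and m2: "\<And>a b c. \<mu> c (a+b) = \<mu> c a + \<mu> c b"
   and ms1: "\<And>k a b. \<mu> (sch k a) b = scg k (\<mu> a b)"
   and ms2: "\<And>k a b. \<mu> b (scg k a) = scg k (\<mu> b a)"
   and mr: "\<And>x y v. \<mu> (brh x y) v = \<mu> x (\<mu> y v) - \<mu> y (\<mu> x v)"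
    using rh unfolding lie_rep_def Vector_Spaces.linear_iff by auto
  have ag: "\<And>a b. brg a b = - brg b a" by (rule anti[OF g1 g2 g0])
  have ah: "\<And>a b. brh a b = - brh b a" by (rule anti[OF h1 h2 h0])
  note d = addhom[of "brg a" for a, OF g2] addhom[of "\<lambda>b. brg b a" for a, OF g1]
     addhom[of "brh a" for a, OF h2] addhom[of "\<lambda>b. brh b a" for a, OF h1]
     addhom[of "\<rho> a" for a, OF r2] addhom[of "\<lambda>b. \<rho> b a" for a, OF r1]
     addhom[of "\<mu> a" for a, OF m2] addhom[of "\<lambda>b. \<mu> b a" for a, OF m1]
  note sdg = module.scale_right_diff_distrib[OF vg[folded module_iff_vector_space]]
       module.scale_right_distrib[OF vg[folded module_iff_vector_space]]
  note sdh = module.scale_right_diff_distrib[OF vh[folded module_iff_vector_space]]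
       module.scale_right_distrib[OF vh[folded module_iff_vector_space]]
  have L1: "Vector_Spaces.linear (sum_scale scg sch) (sum_scale scg sch) (bicrossed brg brh \<rho> \<mu> u)" for u
    unfolding Vector_Spaces.linear_iff
    using vs by (auto simp: bicrossed_def sum_scale_def split: prod.splits
         simp: g1 g2 h1 h2 r1 r2 m1 m2 gs1 gs2 hs1 hs2 rs1 rs2 ms1 ms2 sdg sdh algebra_simps)
  have L2: "Vector_Spaces.linear (sum_scale scg sch) (sum_scale scg sch) (\<lambda>u. bicrossed brg brh \<rho> \<mu> u v)" for v
    unfolding Vector_Spaces.linear_iff
    using vs by (auto simp: bicrossed_def sum_scale_def split: prod.splits
         simp: g1 g2 h1 h2 r1 r2 m1 m2 gs1 gs2 hs1 hs2 rs1 rs2 ms1 ms2 sdg sdh algebra_simps)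
  have A: "bicrossed brg brh \<rho> \<mu> u u = 0" for u
    by (auto simp: bicrossed_def g0 h0 zero_prod_def split: prod.splits)
  have J: "bicrossed brg brh \<rho> \<mu> u (bicrossed brg brh \<rho> \<mu> v w) + bicrossed brg brh \<rho> \<mu> v (bicrossed brg brh \<rho> \<mu> w u) + bicrossed brg brh \<rho> \<mu> w (bicrossed brg brh \<rho> \<mu> u v) = 0" for u v w
    by (rule jac[OF g1 g2 h1 h2 r1 r2 m1 m2 ag ah jg jh rr mr c1 c2])
  show ?thesis unfolding lie_algebra_def using vs L1 L2 A J by blast
qed

lemma deformed_lie:
  assumes enl: "ENL_algebra sc br E"
  shows "lie_algebra sc (deformed br E)"
proof -
  have la: "lie_algebra sc br" and lE: "Vector_Spaces.linear sc sc E"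
    and c: "\<And>x y. E (br x y) = br x (E y)" using enl unfolding ENL_algebra_def by auto
  have vs: "vector_space sc" using la unfolding lie_algebra_def by auto
  have l1: "\<And>x. Vector_Spaces.linear sc sc (br x)" and l2: "\<And>y. Vector_Spaces.linear sc sc (\<lambda>x. br x y)"
    and z: "\<And>x. br x x = 0" and j: "\<And>x y z. br x (br y z) + br y (br z x) + br z (br x y) = 0"
    using la unfolding lie_algebra_def by auto
  have b1: "\<And>a b c. br (a+b) c = br a c + br b c" using l2 lin_add by metis
  have b2: "\<And>a b c. br c (a+b) = br c a + br c b" using l1 lin_add by metis
  have ag: "\<And>a b. br a b = - br b a" by (rule anti[OF b1 b2 z])
  have eadd: "\<And>a b. E (a + b) = E a + E b" using lE lin_add by metis
  note ed = addhom[of E, OF eadd]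
  have K: "br (E a) b = E (br a b)" for a b
    using c[of b a] ag[of "E a" b] ag[of b a] ed(2)[of "br a b"] by (metis minus_minus)
  show ?thesis unfolding lie_algebra_def deformed_def
  proof (intro conjI allI)
    show "vector_space sc" by (rule vs)
    show "Vector_Spaces.linear sc sc (br (E x))" for x by (rule l1)
    show "Vector_Spaces.linear sc sc (\<lambda>x. br (E x) y)" for y
      using Vector_Spaces.linear_compose[OF lE l2[of y]] by (simp add: o_def)
    show "br (E x) x = 0" for x using K[of x x] z ed by simp
    show "br (E x) (br (E y) z) + br (E y) (br (E z) x) + br (E z) (br (E x) y) = 0" for x y z
    proof -
      have T: "br (E a) (br (E b) d) = E (E (br a (br b d)))" for a b d
        by (simp add: K c[symmetric])
      show ?thesis unfolding T using j[of x y z] by (simp add: eadd[symmetric] ed)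
    qed
  qed
qed

theorem theorem2p5:
  fixes scg :: "'k::field_char_0 \<Rightarrow> 'g::ab_group_add \<Rightarrow> 'g"
    and sch :: "'k \<Rightarrow> 'h::ab_group_add \<Rightarrow> 'h"
    and brg :: "'g \<Rightarrow> 'g \<Rightarrow> 'g" and E :: "'g \<Rightarrow> 'g"
    and brh :: "'h \<Rightarrow> 'h \<Rightarrow> 'h" and F :: "'h \<Rightarrow> 'h"
    and \<rho> :: "'g \<Rightarrow> 'h \<Rightarrow> 'h" and \<mu> :: "'h \<Rightarrow> 'g \<Rightarrow> 'g"
  assumes "alg_closed_field TYPE('k)"
    and "fin_dim_vs scg" and "fin_dim_vs sch"
    and "matched_pair_ENL scg brg E sch brh F \<rho> \<mu>"
  shows "matched_pair scg (deformed brg E) sch (deformed brh F)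
           (\<lambda>x \<xi>. \<rho> (E x) \<xi>) (\<lambda>\<xi> x. \<mu> (F \<xi>) x)
       \<and> lie_algebra_iso (sum_scale scg sch)
           (bicrossed (deformed brg E) (deformed brh F) (\<lambda>x \<xi>. \<rho> (E x) \<xi>) (\<lambda>\<xi> x. \<mu> (F \<xi>) x))
           (sum_scale scg sch)
           (deformed (bicrossed brg brh \<rho> \<mu>) (sum_map E F))
           id"
proof -
  note mpe = assms(4)
  have eg: "ENL_algebra scg brg E" and eh: "ENL_algebra sch brh F"
    and mp: "matched_pair scg brg sch brh \<rho> \<mu>"
    and F1: "\<And>x \<xi>. F (\<rho> x \<xi>) = \<rho> (E x) \<xi>"
    and F2: "\<And>x \<xi>. \<rho> (E x) \<xi> = \<rho> x (F \<xi>)"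
    and E1: "\<And>x \<xi>. E (\<mu> \<xi> x) = \<mu> (F \<xi>) x"
    and E2: "\<And>x \<xi>. \<mu> (F \<xi>) x = \<mu> \<xi> (E x)"
    using mpe unfolding matched_pair_ENL_def by auto
  have lg: "lie_algebra scg brg" and lh: "lie_algebra sch brh"
    and rg: "lie_rep scg brg sch \<rho>" and rh: "lie_rep sch brh scg \<mu>"
    and c1: "\<And>x \<xi> \<eta>. \<rho> x (brh \<xi> \<eta>) =
          brh (\<rho> x \<xi>) \<eta> + brh \<xi> (\<rho> x \<eta>) + \<rho> (\<mu> \<eta> x) \<xi> - \<rho> (\<mu> \<xi> x) \<eta>"
    and c2: "\<And>\<xi> x y. \<mu> \<xi> (brg x y) =
          brg (\<mu> \<xi> x) y + brg x (\<mu> \<xi> y) + \<mu> (\<rho> y \<xi>) x - \<mu> (\<rho> x \<xi>) y"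
    using mp unfolding matched_pair_def by auto
  have lE: "Vector_Spaces.linear scg scg E" and cE: "\<And>x y. E (brg x y) = brg x (E y)"
    using eg unfolding ENL_algebra_def by auto
  have lF: "Vector_Spaces.linear sch sch F" and cF: "\<And>x y. F (brh x y) = brh x (F y)"
    using eh unfolding ENL_algebra_def by auto
  have vg: "vector_space scg" and vh: "vector_space sch" using lg lh unfolding lie_algebra_def by auto
  have ldg: "lie_algebra scg (deformed brg E)" by (rule deformed_lie[OF eg])
  have ldh: "lie_algebra sch (deformed brh F)" by (rule deformed_lie[OF eh])
  have rg1: "\<And>x. Vector_Spaces.linear sch sch (\<rho> x)" and rg2: "\<And>v. Vector_Spaces.linear scg sch (\<lambda>x. \<rho> x v)"
    and rr: "\<And>x y v. \<rho> (brg x y) v = \<rho> x (\<rho> y v) - \<rho> y (\<rho> x v)"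
    using rg unfolding lie_rep_def by auto
  have rh1: "\<And>x. Vector_Spaces.linear scg scg (\<mu> x)" and rh2: "\<And>v. Vector_Spaces.linear sch scg (\<lambda>x. \<mu> x v)"
    and mr: "\<And>x y v. \<mu> (brh x y) v = \<mu> x (\<mu> y v) - \<mu> y (\<mu> x v)"
    using rh unfolding lie_rep_def by auto
  have repg: "lie_rep scg (deformed brg E) sch (\<lambda>x \<xi>. \<rho> (E x) \<xi>)"
    unfolding lie_rep_def
  proof (intro conjI allI)
    show "Vector_Spaces.linear sch sch (\<rho> (E x))" for x by (rule rg1)
    show "Vector_Spaces.linear scg sch (\<lambda>x. \<rho> (E x) v)" for v
      using Vector_Spaces.linear_compose[OF lE rg2[of v]] by (simp add: o_def)
    show "\<rho> (E (deformed brg E x y)) v = \<rho> (E x) (\<rho> (E y) v) - \<rho> (E y) (\<rho> (E x) v)" for x y v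
      by (simp add: deformed_def cE rr)
  qed
  have reph: "lie_rep sch (deformed brh F) scg (\<lambda>\<xi> x. \<mu> (F \<xi>) x)"
    unfolding lie_rep_def
  proof (intro conjI allI)
    show "Vector_Spaces.linear scg scg (\<mu> (F x))" for x by (rule rh1)
    show "Vector_Spaces.linear sch scg (\<lambda>x. \<mu> (F x) v)" for v
      using Vector_Spaces.linear_compose[OF lF rh2[of v]] by (simp add: o_def)
    show "\<mu> (F (deformed brh F x y)) v = \<mu> (F x) (\<mu> (F y) v) - \<mu> (F y) (\<mu> (F x) v)" for x y v
      by (simp add: deformed_def cF mr)
  qed
  have MP: "matched_pair scg (deformed brg E) sch (deformed brh F)
           (\<lambda>x \<xi>. \<rho> (E x) \<xi>) (\<lambda>\<xi> x. \<mu> (F \<xi>) x)"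
    unfolding matched_pair_def
  proof (intro conjI allI ldg ldh repg reph)
    show "\<rho> (E x) (deformed brh F \<xi> \<eta>) =
          deformed brh F (\<rho> (E x) \<xi>) \<eta> + deformed brh F \<xi> (\<rho> (E x) \<eta>) +
          \<rho> (E (\<mu> (F \<eta>) x)) \<xi> - \<rho> (E (\<mu> (F \<xi>) x)) \<eta>" for x \<xi> \<eta>
      by (simp add: deformed_def c1 F1 F2[symmetric] E1 E2[symmetric])
    show "\<mu> (F \<xi>) (deformed brg E x y) =
          deformed brg E (\<mu> (F \<xi>) x) y + deformed brg E x (\<mu> (F \<xi>) y) +
          \<mu> (F (\<rho> (E y) \<xi>)) x - \<mu> (F (\<rho> (E x) \<xi>)) y" for \<xi> x y
      by (simp add: deformed_def c2 F1 F2[symmetric] E1 E2[symmetric])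
  qed
  have Beq: "bicrossed (deformed brg E) (deformed brh F) (\<lambda>x \<xi>. \<rho> (E x) \<xi>) (\<lambda>\<xi> x. \<mu> (F \<xi>) x)
     = deformed (bicrossed brg brh \<rho> \<mu>) (sum_map E F)"
    by (intro ext) (auto simp: bicrossed_def deformed_def sum_map_def F1 F2[symmetric] E1 E2[symmetric]
        split: prod.splits)
  have L: "lie_algebra (sum_scale scg sch)
     (bicrossed (deformed brg E) (deformed brh F) (\<lambda>x \<xi>. \<rho> (E x) \<xi>) (\<lambda>\<xi> x. \<mu> (F \<xi>) x))"
    by (rule bicrossed_lie[OF MP])
  have vs: "vector_space (sum_scale scg sch)" by (rule vs_sum[OF vg vh])
  have lid: "Vector_Spaces.linear (sum_scale scg sch) (sum_scale scg sch) id"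
    using vs by (simp add: Vector_Spaces.linear_iff)
  show ?thesis
    using MP L lid unfolding lie_algebra_iso_def Beq by simp
qed

end
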